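(* Consider the setting and definitions in the context. Then $V_{con}-V_{adj}$ is positive semidefinite.
   Context: For each $n$, let $N_n=\{1,\dots,n\}$ and let $\{Y_{n,i}:i\in N_n\}$, $Y_{n,i}\in\mathbb{R}^v$, be random vectors with finite second moments (means may differ across $i$). Each $i$ has a cluster index $g(i)\in\{1,\dots,G\}$ and a time index $t(i)\in\{1,\dots,T\}$. Let $N_t^T=\{i:t(i)=t\}$, $N_g^G=\{i:g(i)=g\}$, $N_{t,g}^{T\cap G}=N_t^T\cap N_g^G$, and $y_t:=\sum_{i\in N_t^T}Y_{n,i}$. Let $M$ be a positive integer and $\omega(m,M)\in[0,1]$ kernel weights. Define $V_{con}:=\sum_{i\in N_n}\sum_{j\in N^G_{g(i)}}E[Y_{n,i}Y_{n,j}']+\sum_{i\in N_n}\sum_{j\in N^T_{t(i)}}E[Y_{n,i}Y_{n,j}']+\sum_{m=1}^M\omega(m,M)\left(\sum_{t=1}^{T-m}E[y_ty_{t+m}']+\sum_{t=1}^{T-m}E[y_{t+m}y_t']+2\sum_{t=1}^TE[y_ty_t']\right)$, $V_{adj}:=\sum_{i\in N_n}\sum_{j\in N^G_{g(i)}}\mathrm{Cov}(Y_{n,i},Y_{n,j})+\sum_{i\in N_n}\sum_{j\in N^T_{t(i)}}\mathrm{Cov}(Y_{n,i},Y_{n,j})-\sum_{i\in N_n}\sum_{j\in N^{T\cap G}_{t(i),g(i)}}\mathrm{Cov}(Y_{n,i},Y_{n,j})+\sum_{m=1}^M\sum_{t=1}^{T-m}\omega(m,M)\mathrm{Cov}(y_t,y_{t+m})+\sum_{m=1}^M\sum_{t=1}^{T-m}\omega(m,M)\mathrm{Cov}(y_{t+m},y_t)$,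 where $\mathrm{Cov}(X,Z)=E[XZ']-E[X]E[Z]'$. *)

theory Defs
  imports "HOL-Probability.Probability"
begin

definition Emat :: "'a measure \<Rightarrow> ('a \<Rightarrow> real^'v) \<Rightarrow> ('a \<Rightarrow> real^'v) \<Rightarrow> real^'v^'v" where
  "Emat M X Z = (\<chi> a b. integral\<^sup>L M (\<lambda>w. X w $ a * Z w $ b))"

definition Evec :: "'a measure \<Rightarrow> ('a \<Rightarrow> real^'v) \<Rightarrow> real^'v" where
  "Evec M X = (\<chi> a. integral\<^sup>L M (\<lambda>w. X w $ a))"

definition Covm :: "'a measure \<Rightarrow> ('a \<Rightarrow> real^'v) \<Rightarrow> ('a \<Rightarrow> real^'v) \<Rightarrow> real^'v^'v" where
  "Covm M X Z = Emat M X Z - (\<chi> a b. Evec M X $ a * Evec M Z $ b)"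

definition psd :: "real^'v^'v \<Rightarrow> bool" where
  "psd A \<longleftrightarrow> (\<forall>x. 0 \<le> x \<bullet> (A *v x))"

definition yagg :: "nat \<Rightarrow> (nat \<Rightarrow> nat) \<Rightarrow> (nat \<Rightarrow> 'a \<Rightarrow> real^'v) \<Rightarrow> nat \<Rightarrow> 'a \<Rightarrow> real^'v" where
  "yagg n tt Y s = (\<lambda>w. \<Sum>i\<in>{i\<in>{1..n}. tt i = s}. Y i w)"

definition Vcon :: "'a measure \<Rightarrow> nat \<Rightarrow> (nat \<Rightarrow> nat) \<Rightarrow> (nat \<Rightarrow> nat) \<Rightarrow> nat \<Rightarrow> nat
    \<Rightarrow> (nat \<Rightarrow> real) \<Rightarrow> (nat \<Rightarrow> 'a \<Rightarrow> real^'v) \<Rightarrow> real^'v^'v" where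
  "Vcon M n g tt T Mk wt Y =
     (\<Sum>i\<in>{1..n}. \<Sum>j\<in>{j\<in>{1..n}. g j = g i}. Emat M (Y i) (Y j))
   + (\<Sum>i\<in>{1..n}. \<Sum>j\<in>{j\<in>{1..n}. tt j = tt i}. Emat M (Y i) (Y j))
   + (\<Sum>m\<in>{1..Mk}. wt m *\<^sub>R
        ((\<Sum>s\<in>{1..T-m}. Emat M (yagg n tt Y s) (yagg n tt Y (s+m)))
       + (\<Sum>s\<in>{1..T-m}. Emat M (yagg n tt Y (s+m)) (yagg n tt Y s))
       + 2 *\<^sub>R (\<Sum>s\<in>{1..T}. Emat M (yagg n tt Y s) (yagg n tt Y s))))"

definition Vadj :: "'a measure \<Rightarrow> nat \<Rightarrow> (nat \<Rightarrow> nat) \<Rightarrow> (nat \<Rightarrow> nat) \<Rightarrow> nat \<Rightarrow> nat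
    \<Rightarrow> (nat \<Rightarrow> real) \<Rightarrow> (nat \<Rightarrow> 'a \<Rightarrow> real^'v) \<Rightarrow> real^'v^'v" where
  "Vadj M n g tt T Mk wt Y =
     (\<Sum>i\<in>{1..n}. \<Sum>j\<in>{j\<in>{1..n}. g j = g i}. Covm M (Y i) (Y j))
   + (\<Sum>i\<in>{1..n}. \<Sum>j\<in>{j\<in>{1..n}. tt j = tt i}. Covm M (Y i) (Y j))
   - (\<Sum>i\<in>{1..n}. \<Sum>j\<in>{j\<in>{1..n}. tt j = tt i \<and> g j = g i}. Covm M (Y i) (Y j))
   + (\<Sum>m\<in>{1..Mk}. \<Sum>s\<in>{1..T-m}. wt m *\<^sub>R Covm M (yagg n tt Y s) (yagg n tt Y (s+m)))
   + (\<Sum>m\<in>{1..Mk}. \<Sum>s\<in>{1..T-m}. wt m *\<^sub>R Covm M (yagg n tt Y (s+m)) (yagg n tt Y s))"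

end

theory Submission
  imports Defs
begin

definition sqi :: "'a measure \<Rightarrow> ('a \<Rightarrow> real) \<Rightarrow> bool" where
  "sqi M f \<longleftrightarrow> f \<in> borel_measurable M \<and> integrable M (\<lambda>w. (f w)^2)"

lemma sqi_mult_int:
  assumes "sqi M f" "sqi M g" shows "integrable M (\<lambda>w. f w * g w)"
proof -
  have i: "integrable M (\<lambda>w. (f w)^2 + (g w)^2)" using assms unfolding sqi_def by auto
  have m: "(\<lambda>w. f w * g w) \<in> borel_measurable M" using assms unfolding sqi_def by auto
  have "AE x in M. norm (f x * g x) \<le> norm ((f x)\<^sup>2 + (g x)\<^sup>2)"
  proof (rule AE_I2)
    fix x
    have "\<bar>f x * g x\<bar> \<le> (f x)\<^sup>2 + (g x)\<^sup>2"
    proof -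
      have "0 \<le> (\<bar>f x\<bar> - \<bar>g x\<bar>)^2" by simp
      then have "2 * (\<bar>f x\<bar> * \<bar>g x\<bar>) \<le> (f x)\<^sup>2 + (g x)\<^sup>2"
        by (simp add: power2_diff)
      moreover have "0 \<le> \<bar>f x\<bar> * \<bar>g x\<bar>" by simp
      moreover have "\<bar>f x * g x\<bar> = \<bar>f x\<bar> * \<bar>g x\<bar>" by (simp add: abs_mult)
      ultimately show ?thesis by linarith
    qed
    then show "norm (f x * g x) \<le> norm ((f x)\<^sup>2 + (g x)\<^sup>2)" by simp
  qed
  then show ?thesis using Bochner_Integration.integrable_bound[OF i m] by blast
qed

lemma sqi_add: assumes "sqi M f" "sqi M g" shows "sqi M (\<lambda>w. f w + g w)"
proof -
  have "integrable M (\<lambda>w. (f w)^2 + 2 * (f w * g w) + (g w)^2)"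
    using assms sqi_mult_int[OF assms] unfolding sqi_def by auto
  moreover have "(\<lambda>w. (f w + g w)^2) = (\<lambda>w. (f w)^2 + 2 * (f w * g w) + (g w)^2)"
    by (simp add: power2_sum algebra_simps)
  ultimately show ?thesis using assms unfolding sqi_def by auto
qed

lemma sqi_cmult: assumes "sqi M f" shows "sqi M (\<lambda>w. c * f w)"
  using assms unfolding sqi_def by (auto simp: power_mult_distrib intro: borel_measurable_times)

lemma sqi_zero: "sqi M (\<lambda>w. 0)" unfolding sqi_def by simp

lemma sqi_sum: "(\<And>i. i \<in> I \<Longrightarrow> sqi M (f i)) \<Longrightarrow> sqi M (\<lambda>w. \<Sum>i\<in>I. f i w)"
proof (induction I rule: infinite_finite_induct)
  case (insert x F)
  then show ?case using sqi_add[of M "f x" "\<lambda>w. \<Sum>i\<in>F. f i w"] by simp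
qed (auto simp: sqi_zero)

lemma (in prob_space) sqi_int: assumes "sqi M f" shows "integrable M f"
proof -
  have "sqi M (\<lambda>w. 1)" unfolding sqi_def by simp
  from sqi_mult_int[OF assms this] show ?thesis by simp
qed

definition qf :: "real^'v \<Rightarrow> real^'v^'v \<Rightarrow> real" where
  "qf x A = x \<bullet> (A *v x)"

lemma qf_expand: "qf x A = (\<Sum>a\<in>UNIV. \<Sum>b\<in>UNIV. x$a * A$a$b * x$b)"
  unfolding qf_def inner_vec_def matrix_vector_mult_def
  by (simp add: sum_distrib_left mult.assoc)

lemma qf_add[simp]: "qf x (A + B) = qf x A + qf x B"
  unfolding qf_expand by (simp add: algebra_simps sum.distrib)
lemma qf_diff[simp]: "qf x (A - B) = qf x A - qf x B"
  unfolding qf_expand by (simp add: algebra_simps sum_subtractf)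
lemma qf_scale[simp]: "qf x (c *\<^sub>R A) = c * qf x A"
  unfolding qf_expand by (simp add: algebra_simps sum_distrib_left)
lemma qf_zero[simp]: "qf x 0 = 0"
  unfolding qf_expand by simp
lemma qf_sum[simp]: "qf x (sum f S) = (\<Sum>i\<in>S. qf x (f i))"
  by (induction S rule: infinite_finite_induct) auto

lemma inner_expand: "(x::real^'v) \<bullet> y = (\<Sum>a\<in>UNIV. x$a * y$a)"
  unfolding inner_vec_def by simp

lemma sqi_inner: assumes "\<And>a. sqi M (\<lambda>w. X w $ a)" shows "sqi M (\<lambda>w. (x::real^'v) \<bullet> X w)"
  unfolding inner_expand by (intro sqi_sum sqi_cmult assms)

lemma qf_Emat:
  assumes X: "\<And>a. sqi M (\<lambda>w. X w $ a)" and Z: "\<And>a. sqi M (\<lambda>w. Z w $ a)"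
  shows "qf x (Emat M X Z) = integral\<^sup>L M (\<lambda>w. (x \<bullet> X w) * (x \<bullet> Z w))"
proof -
  have I: "integrable M (\<lambda>w. x$a * X w $ a * Z w $ b * x$b)" for a b
  proof -
    have "integrable M (\<lambda>w. (x$a * x$b) * (X w $ a * Z w $ b))"
      using sqi_mult_int[OF X Z] by (intro integrable_mult_right) blast
    then show ?thesis by (simp add: algebra_simps)
  qed
  have "qf x (Emat M X Z) = (\<Sum>a\<in>UNIV. \<Sum>b\<in>UNIV. integral\<^sup>L M (\<lambda>w. x$a * X w $ a * Z w $ b * x$b))"
    unfolding qf_expand Emat_def by (simp add: algebra_simps)
  also have "\<dots> = integral\<^sup>L M (\<lambda>w. \<Sum>a\<in>UNIV. \<Sum>b\<in>UNIV. x$a * X w $ a * Z w $ b * x$b)"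
    using I by (simp add: integral_sum)
  also have "\<dots> = integral\<^sup>L M (\<lambda>w. (x \<bullet> X w) * (x \<bullet> Z w))"
    unfolding inner_expand by (simp add: sum_product algebra_simps)
  finally show ?thesis .
qed

lemma (in prob_space) qf_Covm:
  assumes X: "\<And>a. sqi M (\<lambda>w. X w $ a)" and Z: "\<And>a. sqi M (\<lambda>w. Z w $ a)"
  shows "qf x (Covm M X Z) = integral\<^sup>L M (\<lambda>w. (x \<bullet> X w) * (x \<bullet> Z w))
     - integral\<^sup>L M (\<lambda>w. x \<bullet> X w) * integral\<^sup>L M (\<lambda>w. x \<bullet> Z w)"
proof -
  have IX: "integrable M (\<lambda>w. X w $ a)" "integrable M (\<lambda>w. Z w $ a)" for a
    using sqi_int X Z by auto
  have "qf x (\<chi> a b. Evec M X $ a * Evec M Z $ b) = (x \<bullet> Evec M X) * (x \<bullet> Evec M Z)"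
    unfolding qf_expand inner_expand by (simp add: sum_product algebra_simps)
  moreover have "x \<bullet> Evec M X = integral\<^sup>L M (\<lambda>w. x \<bullet> X w)"
    unfolding inner_expand Evec_def using IX by (simp add: integral_sum)
  moreover have "x \<bullet> Evec M Z = integral\<^sup>L M (\<lambda>w. x \<bullet> Z w)"
    unfolding inner_expand Evec_def using IX by (simp add: integral_sum)
  ultimately show ?thesis unfolding Covm_def using qf_Emat[OF X Z] by simp
qed

lemma grp_nonneg:
  fixes f :: "nat \<Rightarrow> real"
  assumes "finite S"
  shows "0 \<le> (\<Sum>i\<in>S. \<Sum>j\<in>{j\<in>S. k j = k i}. f i * f j)"
proof -
  define B where "B c = (\<Sum>j\<in>{j\<in>S. k j = c}. f j)" for c
  have "(\<Sum>i\<in>S. \<Sum>j\<in>{j\<in>S. k j = k i}. f i * f j) = (\<Sum>i\<in>S. f i * B (k i))"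
    unfolding B_def by (simp add: sum_distrib_left)
  also have "\<dots> = (\<Sum>c\<in>k ` S. \<Sum>i\<in>{i. i \<in> S \<and> k i = c}. f i * B (k i))"
    by (rule sum.group[symmetric]) (use assms in auto)
  also have "\<dots> = (\<Sum>c\<in>k ` S. B c * B c)"
    unfolding B_def by (intro sum.cong refl) (auto simp: sum_distrib_right intro!: sum.cong)
  also have "\<dots> \<ge> 0" by (intro sum_nonneg) simp
  finally show ?thesis .
qed


lemma (in prob_space) sqi_const: "sqi M (\<lambda>w. c)"
  unfolding sqi_def by simp

lemma lag_nonneg:
  fixes a :: "nat \<Rightarrow> real"
  shows "0 \<le> (\<Sum>s\<in>{1..T-m}. a s * a (s+m)) + (\<Sum>s\<in>{1..T-m}. a (s+m) * a s) + 2 * (\<Sum>s\<in>{1..T}. (a s)^2)"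
proof -
  have p: "- ((a s)^2 + (a (s+m))^2) \<le> 2 * (a s * a (s+m))" for s
  proof -
    have "0 \<le> (a s + a (s+m))^2" by simp
    then show ?thesis by (simp add: power2_sum)
  qed
  have s1: "(\<Sum>s\<in>{1..T-m}. (a s)^2) \<le> (\<Sum>s\<in>{1..T}. (a s)^2)"
    by (intro sum_mono2) auto
  have "(\<Sum>s\<in>{1..T-m}. (a (s+m))^2) = (\<Sum>s\<in>(\<lambda>s. s+m) ` {1..T-m}. (a s)^2)"
    by (subst sum.reindex) (auto simp: inj_on_def)
  also have "\<dots> \<le> (\<Sum>s\<in>{1..T}. (a s)^2)"
    by (intro sum_mono2) auto
  finally have s2: "(\<Sum>s\<in>{1..T-m}. (a (s+m))^2) \<le> (\<Sum>s\<in>{1..T}. (a s)^2)" .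
  have "- (\<Sum>s\<in>{1..T-m}. (a s)^2) - (\<Sum>s\<in>{1..T-m}. (a (s+m))^2)
      \<le> (\<Sum>s\<in>{1..T-m}. 2 * (a s * a (s+m)))"
    using sum_mono[of "{1..T-m}" "\<lambda>s. - ((a s)^2 + (a (s+m))^2)", OF p]
    by (simp add: sum_subtractf sum_negf)
  moreover have "(\<Sum>s\<in>{1..T-m}. 2 * (a s * a (s+m))) = (\<Sum>s\<in>{1..T-m}. a s * a (s+m)) + (\<Sum>s\<in>{1..T-m}. a (s+m) * a s)"
    by (simp add: sum_distrib_left[symmetric] mult.commute)
  ultimately show ?thesis using s1 s2 by linarith
qed


theorem proposition1:
  fixes M :: "'a measure" and n G T Mk :: nat
    and g tt :: "nat \<Rightarrow> nat" and wt :: "nat \<Rightarrow> real"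
    and Y :: "nat \<Rightarrow> 'a \<Rightarrow> real^'v"
  assumes "prob_space M"
    and "\<And>i. i \<in> {1..n} \<Longrightarrow> Y i \<in> borel_measurable M"
    and "\<And>i k. i \<in> {1..n} \<Longrightarrow> integrable M (\<lambda>w. (Y i w $ k)^2)"
    and "\<And>i. i \<in> {1..n} \<Longrightarrow> g i \<in> {1..G}"
    and "\<And>i. i \<in> {1..n} \<Longrightarrow> tt i \<in> {1..T}"
    and "Mk \<ge> 1"
    and "\<And>m. m \<in> {1..Mk} \<Longrightarrow> 0 \<le> wt m \<and> wt m \<le> 1"
  shows "psd (Vcon M n g tt T Mk wt Y - Vadj M n g tt T Mk wt Y)"
  unfolding psd_def
proof
  fix x :: "real^'v"
  interpret prob_space M by fact
  have YS: "sqi M (\<lambda>w. Y i w $ a)" if "i \<in> {1..n}" for i a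
    unfolding sqi_def using assms(2,3)[OF that]
    by (auto intro: measurable_compose[OF _ borel_measurable_nth])
  have yS: "sqi M (\<lambda>w. yagg n tt Y s w $ a)" for s a
    unfolding yagg_def sum_component by (intro sqi_sum YS) auto
  define U where "U i w = x \<bullet> Y i w" for i w
  define mu where "mu i = integral\<^sup>L M (U i)" for i
  define u where "u s w = x \<bullet> yagg n tt Y s w" for s w
  define al where "al s = integral\<^sup>L M (u s)" for s
  have US: "sqi M (U i)" if "i \<in> {1..n}" for i
    unfolding U_def by (intro sqi_inner YS that)
  have uS: "sqi M (u s)" for s
    unfolding u_def by (intro sqi_inner yS)
  have EY: "qf x (Emat M (Y i) (Y j)) = integral\<^sup>L M (\<lambda>w. U i w * U j w)"
    if "i \<in> {1..n}" "j \<in> {1..n}" for i j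
    unfolding U_def by (intro qf_Emat YS that)
  have CY: "qf x (Covm M (Y i) (Y j)) = integral\<^sup>L M (\<lambda>w. U i w * U j w) - mu i * mu j"
    if "i \<in> {1..n}" "j \<in> {1..n}" for i j
    unfolding U_def mu_def by (intro qf_Covm YS that)
  have Ey: "qf x (Emat M (yagg n tt Y s) (yagg n tt Y s')) = integral\<^sup>L M (\<lambda>w. u s w * u s' w)" for s s'
    unfolding u_def by (intro qf_Emat yS)
  have Cy: "qf x (Covm M (yagg n tt Y s) (yagg n tt Y s')) = integral\<^sup>L M (\<lambda>w. u s w * u s' w) - al s * al s'" for s s'
    unfolding u_def al_def by (intro qf_Covm yS)

  have D1: "qf x (\<Sum>i\<in>{1..n}. \<Sum>j\<in>{j\<in>{1..n}. k j = k i}. Emat M (Y i) (Y j))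
      - qf x (\<Sum>i\<in>{1..n}. \<Sum>j\<in>{j\<in>{1..n}. k j = k i}. Covm M (Y i) (Y j))
      = (\<Sum>i\<in>{1..n}. \<Sum>j\<in>{j\<in>{1..n}. k j = k i}. mu i * mu j)" for k :: "nat \<Rightarrow> nat"
  proof -
    have "qf x (\<Sum>i\<in>{1..n}. \<Sum>j\<in>{j\<in>{1..n}. k j = k i}. Emat M (Y i) (Y j))
      - qf x (\<Sum>i\<in>{1..n}. \<Sum>j\<in>{j\<in>{1..n}. k j = k i}. Covm M (Y i) (Y j))
      = (\<Sum>i\<in>{1..n}. \<Sum>j\<in>{j\<in>{1..n}. k j = k i}.
           qf x (Emat M (Y i) (Y j)) - qf x (Covm M (Y i) (Y j)))"
      by (simp add: sum_subtractf)
    also have "\<dots> = (\<Sum>i\<in>{1..n}. \<Sum>j\<in>{j\<in>{1..n}. k j = k i}. mu i * mu j)"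
      by (intro sum.cong refl) (simp add: EY CY)
    finally show ?thesis .
  qed
  have P1: "0 \<le> (\<Sum>i\<in>{1..n}. \<Sum>j\<in>{j\<in>{1..n}. k j = k i}. mu i * mu j)" for k :: "nat \<Rightarrow> nat"
    by (rule grp_nonneg) simp

  define V where "V i w = U i w - mu i" for i w
  have VS: "sqi M (V i)" if "i \<in> {1..n}" for i
    unfolding V_def using sqi_add[OF US[OF that] sqi_cmult[OF sqi_const, of "-1" "mu i"]]
    by simp
  have VV: "integral\<^sup>L M (\<lambda>w. V i w * V j w) = integral\<^sup>L M (\<lambda>w. U i w * U j w) - mu i * mu j"
    if "i \<in> {1..n}" "j \<in> {1..n}" for i j
  proof -
    have e: "(\<lambda>w. V i w * V j w) = (\<lambda>w. (U i w * U j w - mu j * U i w) - (mu i * U j w - mu i * mu j))"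
      by (auto simp: V_def algebra_simps)
    have i1: "integrable M (\<lambda>w. U i w * U j w)" using sqi_mult_int[OF US US] that by blast
    have i2: "integrable M (U i)" "integrable M (U j)" using sqi_int US that by auto
    show ?thesis unfolding e using i1 i2
      by (simp add: integral_diff mu_def prob_space)
  qed
  have P3: "0 \<le> qf x (\<Sum>i\<in>{1..n}. \<Sum>j\<in>{j\<in>{1..n}. tt j = tt i \<and> g j = g i}. Covm M (Y i) (Y j))"
  proof -
    have "qf x (\<Sum>i\<in>{1..n}. \<Sum>j\<in>{j\<in>{1..n}. tt j = tt i \<and> g j = g i}. Covm M (Y i) (Y j))
       = (\<Sum>i\<in>{1..n}. \<Sum>j\<in>{j\<in>{1..n}. (tt j, g j) = (tt i, g i)}. integral\<^sup>L M (\<lambda>w. V i w * V j w))"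
      unfolding qf_sum
      by (rule sum.cong[OF refl], rule sum.cong) (auto simp: CY VV)
    also have "\<dots> = integral\<^sup>L M (\<lambda>w. \<Sum>i\<in>{1..n}. \<Sum>j\<in>{j\<in>{1..n}. (tt j, g j) = (tt i, g i)}. V i w * V j w)"
    proof -
      have I: "integrable M (\<lambda>w. V i w * V j w)" if "i \<in> {1..n}" "j \<in> {1..n}" for i j
        using sqi_mult_int[OF VS VS] that by blast
      have "integral\<^sup>L M (\<lambda>w. \<Sum>i\<in>{1..n}. \<Sum>j\<in>{j\<in>{1..n}. (tt j, g j) = (tt i, g i)}. V i w * V j w)
        = (\<Sum>i\<in>{1..n}. integral\<^sup>L M (\<lambda>w. \<Sum>j\<in>{j\<in>{1..n}. (tt j, g j) = (tt i, g i)}. V i w * V j w))"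
        by (subst Bochner_Integration.integral_sum) (auto intro!: integrable_sum I)
      also have "\<dots> = (\<Sum>i\<in>{1..n}. \<Sum>j\<in>{j\<in>{1..n}. (tt j, g j) = (tt i, g i)}. integral\<^sup>L M (\<lambda>w. V i w * V j w))"
        by (rule sum.cong[OF refl], subst Bochner_Integration.integral_sum) (auto intro!: I)
      finally show ?thesis by simp
    qed
    also have "\<dots> \<ge> 0"
      by (intro Bochner_Integration.integral_nonneg grp_nonneg) simp
    finally show ?thesis .
  qed
  let ?y = "yagg n tt Y"
  have P4e: "wt m * qf x ((\<Sum>s\<in>{1..T-m}. Emat M (?y s) (?y (s+m)))
       + (\<Sum>s\<in>{1..T-m}. Emat M (?y (s+m)) (?y s))
       + 2 *\<^sub>R (\<Sum>s\<in>{1..T}. Emat M (?y s) (?y s)))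
     - (\<Sum>s\<in>{1..T-m}. qf x (wt m *\<^sub>R Covm M (?y s) (?y (s+m))))
     - (\<Sum>s\<in>{1..T-m}. qf x (wt m *\<^sub>R Covm M (?y (s+m)) (?y s)))
     = wt m * ((\<Sum>s\<in>{1..T-m}. al s * al (s+m)) + (\<Sum>s\<in>{1..T-m}. al (s+m) * al s)
         + 2 * (\<Sum>s\<in>{1..T}. integral\<^sup>L M (\<lambda>w. u s w * u s w)))" for m
    by (simp add: Ey Cy sum_subtractf algebra_simps sum_distrib_left[symmetric])
      (simp add: sum_distrib_left mult.left_commute)
  have var: "(al s)^2 \<le> integral\<^sup>L M (\<lambda>w. u s w * u s w)" for s
  proof -
    have "integrable M (u s)" using sqi_int uS by blast
    moreover have "integrable M (\<lambda>w. (u s w)^2)" using uS unfolding sqi_def by blast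
    ultimately have "variance (u s) = expectation (\<lambda>w. (u s w)^2) - (al s)^2"
      unfolding al_def by (rule variance_eq)
    then show ?thesis using variance_positive[of "u s"] by (simp add: power2_eq_square)
  qed
  have P4: "0 \<le> wt m * ((\<Sum>s\<in>{1..T-m}. al s * al (s+m)) + (\<Sum>s\<in>{1..T-m}. al (s+m) * al s)
         + 2 * (\<Sum>s\<in>{1..T}. integral\<^sup>L M (\<lambda>w. u s w * u s w)))" if "m \<in> {1..Mk}" for m
  proof -
    have "(\<Sum>s\<in>{1..T}. (al s)^2) \<le> (\<Sum>s\<in>{1..T}. integral\<^sup>L M (\<lambda>w. u s w * u s w))"
      by (intro sum_mono var)
    then have "0 \<le> (\<Sum>s\<in>{1..T-m}. al s * al (s+m)) + (\<Sum>s\<in>{1..T-m}. al (s+m) * al s)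
         + 2 * (\<Sum>s\<in>{1..T}. integral\<^sup>L M (\<lambda>w. u s w * u s w))"
      using lag_nonneg[of al m T] by linarith
    then show ?thesis using assms(7)[OF that] by simp
  qed
  have main: "qf x (Vcon M n g tt T Mk wt Y - Vadj M n g tt T Mk wt Y)
    = (qf x (\<Sum>i\<in>{1..n}. \<Sum>j\<in>{j\<in>{1..n}. g j = g i}. Emat M (Y i) (Y j))
      - qf x (\<Sum>i\<in>{1..n}. \<Sum>j\<in>{j\<in>{1..n}. g j = g i}. Covm M (Y i) (Y j)))
    + (qf x (\<Sum>i\<in>{1..n}. \<Sum>j\<in>{j\<in>{1..n}. tt j = tt i}. Emat M (Y i) (Y j))
      - qf x (\<Sum>i\<in>{1..n}. \<Sum>j\<in>{j\<in>{1..n}. tt j = tt i}. Covm M (Y i) (Y j)))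
    + qf x (\<Sum>i\<in>{1..n}. \<Sum>j\<in>{j\<in>{1..n}. tt j = tt i \<and> g j = g i}. Covm M (Y i) (Y j))
    + (qf x (\<Sum>m\<in>{1..Mk}. wt m *\<^sub>R
        ((\<Sum>s\<in>{1..T-m}. Emat M (?y s) (?y (s+m)))
       + (\<Sum>s\<in>{1..T-m}. Emat M (?y (s+m)) (?y s))
       + 2 *\<^sub>R (\<Sum>s\<in>{1..T}. Emat M (?y s) (?y s))))
      - qf x (\<Sum>m\<in>{1..Mk}. \<Sum>s\<in>{1..T-m}. wt m *\<^sub>R Covm M (?y s) (?y (s+m)))
      - qf x (\<Sum>m\<in>{1..Mk}. \<Sum>s\<in>{1..T-m}. wt m *\<^sub>R Covm M (?y (s+m)) (?y s)))"
    unfolding Vcon_def Vadj_def qf_diff qf_add by linarith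
  have main2: "qf x (\<Sum>m\<in>{1..Mk}. wt m *\<^sub>R
        ((\<Sum>s\<in>{1..T-m}. Emat M (?y s) (?y (s+m)))
       + (\<Sum>s\<in>{1..T-m}. Emat M (?y (s+m)) (?y s))
       + 2 *\<^sub>R (\<Sum>s\<in>{1..T}. Emat M (?y s) (?y s))))
      - qf x (\<Sum>m\<in>{1..Mk}. \<Sum>s\<in>{1..T-m}. wt m *\<^sub>R Covm M (?y s) (?y (s+m)))
      - qf x (\<Sum>m\<in>{1..Mk}. \<Sum>s\<in>{1..T-m}. wt m *\<^sub>R Covm M (?y (s+m)) (?y s))
    = (\<Sum>m\<in>{1..Mk}. wt m * ((\<Sum>s\<in>{1..T-m}. al s * al (s+m)) + (\<Sum>s\<in>{1..T-m}. al (s+m) * al s)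
         + 2 * (\<Sum>s\<in>{1..T}. integral\<^sup>L M (\<lambda>w. u s w * u s w))))"
    unfolding qf_sum qf_scale sum_subtractf[symmetric] using P4e[unfolded qf_scale] by simp
  show "0 \<le> x \<bullet> ((Vcon M n g tt T Mk wt Y - Vadj M n g tt T Mk wt Y) *v x)"
  proof -
    have S4: "0 \<le> (\<Sum>m\<in>{1..Mk}. wt m * ((\<Sum>s\<in>{1..T-m}. al s * al (s+m)) + (\<Sum>s\<in>{1..T-m}. al (s+m) * al s)
         + 2 * (\<Sum>s\<in>{1..T}. integral\<^sup>L M (\<lambda>w. u s w * u s w))))"
      by (rule sum_nonneg) (rule P4)
    have "0 \<le> qf x (Vcon M n g tt T Mk wt Y - Vadj M n g tt T Mk wt Y)"
      using main main2 D1[of g] D1[of tt] P1[of g] P1[of tt] P3 S4 by linarith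
    then show ?thesis unfolding qf_def .
  qed
qed
end
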